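(* For every $n\in\mathbb{N}$ and every $l\in\{0,1,\dots,5\}$ there is a triangle-free outerplanar graph $G$ with $|V(G)|>n$, $|V_1(G)|=l$ and $\rho_G^3=3$ that has no equitable $3$-coloring.
   Context: For a graph $G$, $V_1(G)$ is the set of vertices of degree $1$, and for $A\subseteq V(G)$, $\|G[A]\|$ is the number of edges of $G[A]$. Define $\rho_G^3(A)=6\|G[A]\|-7|A|+3|A\cap V_1(G)|$ and $\rho_G^3=\max_{A\subseteq V(G)}\rho_G^3(A)$ (including $A=\emptyset$). An equitable $3$-coloring is a proper vertex coloring with $3$ colors in which the sizes of any two color classes differ by at most $1$. *)

theory Defs
  imports "HOL-Analysis.Analysis"
begin

definition simple_graph :: "'a set \<Rightarrow> 'a set set \<Rightarrow> bool" where
  "simple_graph V E \<longleftrightarrow> finite V \<and>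
     (\<forall>e\<in>E. \<exists>u v. e = {u, v} \<and> u \<noteq> v \<and> u \<in> V \<and> v \<in> V)"

definition degree :: "'a set set \<Rightarrow> 'a \<Rightarrow> nat" where
  "degree E v = card {e\<in>E. v \<in> e}"

definition V1 :: "'a set \<Rightarrow> 'a set set \<Rightarrow> 'a set" where
  "V1 V E = {v\<in>V. degree E v = 1}"

definition induced_edges :: "'a set set \<Rightarrow> 'a set \<Rightarrow> nat" where
  "induced_edges E A = card {e\<in>E. e \<subseteq> A}"

definition rho3_set :: "'a set \<Rightarrow> 'a set set \<Rightarrow> 'a set \<Rightarrow> int" where
  "rho3_set V E A = 6 * int (induced_edges E A) - 7 * int (card A) + 3 * int (card (A \<inter> V1 V E))"

definition rho3 :: "'a set \<Rightarrow> 'a set set \<Rightarrow> int" where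
  "rho3 V E = Max (rho3_set V E ` Pow V)"

definition triangle_free :: "'a set set \<Rightarrow> bool" where
  "triangle_free E \<longleftrightarrow> \<not> (\<exists>a b c. a \<noteq> b \<and> b \<noteq> c \<and> a \<noteq> c \<and>
       {a, b} \<in> E \<and> {b, c} \<in> E \<and> {a, c} \<in> E)"

definition equitable_3_coloring :: "'a set \<Rightarrow> 'a set set \<Rightarrow> ('a \<Rightarrow> nat) \<Rightarrow> bool" where
  "equitable_3_coloring V E f \<longleftrightarrow>
     (\<forall>v\<in>V. f v < 3) \<and>
     (\<forall>e\<in>E. \<forall>u\<in>e. \<forall>v\<in>e. u \<noteq> v \<longrightarrow> f u \<noteq> f v) \<and>
     (\<forall>i<3. \<forall>j<3. card {v\<in>V. f v = i} \<le> card {v\<in>V. f v = j} + 1)"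

text \<open>Outerplanar: some drawing where every vertex lies on the
  boundary (closure) of the outer (unbounded) face of the drawing.\<close>
definition plane_drawing :: "'a set \<Rightarrow> 'a set set \<Rightarrow> ('a \<Rightarrow> complex) \<Rightarrow> ('a set \<Rightarrow> real \<Rightarrow> complex) \<Rightarrow> bool" where
  "plane_drawing V E pos arcs \<longleftrightarrow>
     inj_on pos V \<and>
     (\<forall>e\<in>E. arc (arcs e) \<and> {pathstart (arcs e), pathfinish (arcs e)} = pos ` e \<and>
              path_image (arcs e) \<inter> pos ` V = pos ` e) \<and>
     (\<forall>e\<in>E. \<forall>e'\<in>E. e \<noteq> e' \<longrightarrow> path_image (arcs e) \<inter> path_image (arcs e') \<subseteq> pos ` (e \<inter> e'))"

definition drawing_image :: "'a set \<Rightarrow> 'a set set \<Rightarrow> ('a \<Rightarrow> complex) \<Rightarrow> ('a set \<Rightarrow> real \<Rightarrow> complex) \<Rightarrow> complex set" where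
  "drawing_image V E pos arcs = pos ` V \<union> (\<Union>e\<in>E. path_image (arcs e))"

definition outerplanar :: "'a set \<Rightarrow> 'a set set \<Rightarrow> bool" where
  "outerplanar V E \<longleftrightarrow> (\<exists>pos arcs. plane_drawing V E pos arcs \<and>
      pos ` V \<subseteq> closure (outside (drawing_image V E pos arcs)))"

end

theory Submission
  imports Defs
begin


definition ppos :: "nat \<Rightarrow> complex" where
  "ppos n = Complex (real n) (real n ^ 2)"

lemma seg_char:
  assumes "z \<in> closed_segment (Complex a (a^2)) (Complex b (b^2))" "a \<le> b"
  shows "a \<le> Re z \<and> Re z \<le> b \<and> Im z - (Re z)^2 = (Re z - a) * (b - Re z)"
proof -
  obtain u where u: "0 \<le> u" "u \<le> 1" "z = (1 - u) *\<^sub>R Complex a (a^2) + u *\<^sub>R Complex b (b^2)"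
    using assms(1) by (auto simp: in_segment)
  have re: "Re z = (1-u)*a + u*b" and im: "Im z = (1-u)*a^2 + u*b^2" using u(3) by auto
  have "a \<le> (1-u)*a + u*b"
  proof -
    have "(1-u)*a + u*b - a = u*(b-a)" by (simp add: algebra_simps)
    also have "\<dots> \<ge> 0" using u assms by simp
    finally show ?thesis by simp
  qed
  moreover have "(1-u)*a + u*b \<le> b"
  proof -
    have "b - ((1-u)*a + u*b) = (1-u)*(b-a)" by (simp add: algebra_simps)
    also have "\<dots> \<ge> 0" using u assms by simp
    finally show ?thesis by simp
  qed
  moreover have "(1-u)*a^2 + u*b^2 - ((1-u)*a + u*b)^2 = ((1-u)*a + u*b - a) * (b - ((1-u)*a + u*b))"
    by (simp add: algebra_simps power2_eq_square)
  ultimately show ?thesis using re im by simp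
qed

lemma nested_eq:
  fixes a b c d x :: real
  assumes "a \<le> c" "c < d" "d \<le> b" "c \<le> x" "x \<le> d"
    "(x-a)*(b-x) = (x-c)*(d-x)" "(a,b) \<noteq> (c,d)"
  shows "(x = a \<and> a = c) \<or> (x = b \<and> b = d)"
proof -
  have e: "(x-a)*(b-x) - (x-c)*(d-x) = (c-a)*(b-x) + (x-c)*(b-d)" by (simp add: algebra_simps)
  have 1: "(c-a)*(b-x) \<ge> 0" using assms by simp
  have 2: "(x-c)*(b-d) \<ge> 0" using assms by simp
  have "(c-a)*(b-x) = 0" "(x-c)*(b-d) = 0" using e 1 2 assms(6) by linarith+
  then show ?thesis using assms by auto
qed

lemma ppos_seg:
  assumes "z \<in> closed_segment (ppos a) (ppos b)" "a \<le> b"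
  shows "real a \<le> Re z \<and> Re z \<le> real b \<and> Im z - (Re z)^2 = (Re z - real a) * (real b - Re z)"
  using seg_char[of z "real a" "real b"] assms by (simp add: ppos_def)

lemma z_eq_ppos: "Re z = real m \<Longrightarrow> Im z - (Re z)^2 = 0 \<Longrightarrow> z = ppos m"
  by (simp add: ppos_def complex_eq_iff)

lemma cross_nested:
  assumes "a \<le> c" "c < d" "d \<le> b" "(a,b) \<noteq> (c,d)"
    "z \<in> closed_segment (ppos a) (ppos b)" "z \<in> closed_segment (ppos c) (ppos d)"
  shows "(z = ppos a \<and> a = c) \<or> (z = ppos b \<and> b = d)"
proof -
  have s1: "real a \<le> Re z \<and> Re z \<le> real b \<and> Im z - (Re z)^2 = (Re z - real a) * (real b - Re z)"
    using ppos_seg[OF assms(5)] assms(1-3) by linarith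
  have s2: "real c \<le> Re z \<and> Re z \<le> real d \<and> Im z - (Re z)^2 = (Re z - real c) * (real d - Re z)"
    using ppos_seg[OF assms(6)] assms(2) by linarith
  have ne: "(real a, real b) \<noteq> (real c, real d)" using assms(4) by auto
  have eq: "(Re z - real a) * (real b - Re z) = (Re z - real c) * (real d - Re z)"
    using s1 s2 by linarith
  have "(Re z = real a \<and> real a = real c) \<or> (Re z = real b \<and> real b = real d)"
    apply (rule nested_eq[of "real a" "real c" "real d" "real b" "Re z"])
    using s1 s2 assms(1-3) ne eq by auto
  then show ?thesis
  proof
    assume h: "Re z = real a \<and> real a = real c"
    then have "z = ppos a" using s1 by (intro z_eq_ppos) auto
    then show ?thesis using h by auto
  next
    assume h: "Re z = real b \<and> real b = real d"
    then have "z = ppos b" using s1 by (intro z_eq_ppos) auto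
    then show ?thesis using h by auto
  qed
qed

lemma cross_disj:
  assumes "a < b" "b \<le> c" "c < d"
    "z \<in> closed_segment (ppos a) (ppos b)" "z \<in> closed_segment (ppos c) (ppos d)"
  shows "z = ppos b \<and> b = c"
proof -
  have s1: "real a \<le> Re z \<and> Re z \<le> real b \<and> Im z - (Re z)^2 = (Re z - real a) * (real b - Re z)"
    using ppos_seg[OF assms(4)] assms(1) by linarith
  have s2: "real c \<le> Re z \<and> Re z \<le> real d"
    using ppos_seg[OF assms(5)] assms(3) by linarith
  have "Re z = real b" "real b = real c" using s1 s2 assms by auto
  moreover have "z = ppos b" using s1 \<open>Re z = real b\<close> by (intro z_eq_ppos) auto
  ultimately show ?thesis by simp
qed

lemma ppos_on_seg:
  assumes "ppos m \<in> closed_segment (ppos a) (ppos b)" "a \<le> b"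
  shows "m = a \<or> m = b"
proof -
  have "Im (ppos m) - (Re (ppos m))^2 = (Re (ppos m) - real a) * (real b - Re (ppos m))"
    using ppos_seg[OF assms] by blast
  then have "(real m - real a) * (real b - real m) = 0" by (simp add: ppos_def)
  then show ?thesis by auto
qed

lemma seg_above:
  assumes "z \<in> closed_segment (ppos a) (ppos b)" "a \<le> b"
  shows "(Re z)^2 \<le> Im z"
proof -
  have "real a \<le> Re z \<and> Re z \<le> real b \<and> Im z - (Re z)^2 = (Re z - real a) * (real b - Re z)"
    using ppos_seg[OF assms] by blast
  then have "Im z - (Re z)^2 \<ge> 0" by simp
  then show ?thesis by simp
qed

definition good_edge :: "nat set \<Rightarrow> bool" where
  "good_edge e \<longleftrightarrow> (\<exists>x>0. e = {0,x}) \<or> (\<exists>i. e = {i, Suc i})"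

definition parcs :: "nat set \<Rightarrow> real \<Rightarrow> complex" where
  "parcs e = linepath (ppos (Min e)) (ppos (Max e))"

lemma good_edge_MinMax:
  assumes "good_edge e"
  shows "Min e < Max e \<and> e = {Min e, Max e}"
  using assms unfolding good_edge_def by auto

lemma good_cross:
  assumes "good_edge e1" "good_edge e2" "e1 \<noteq> e2"
    "z \<in> closed_segment (ppos (Min e1)) (ppos (Max e1))"
    "z \<in> closed_segment (ppos (Min e2)) (ppos (Max e2))"
  shows "z \<in> ppos ` (e1 \<inter> e2)"
  using assms(1)
  unfolding good_edge_def
proof
  assume "\<exists>x>0. e1 = {0,x}"
  then obtain b where b: "b > 0" "e1 = {0,b}" by blast
  have mm1: "Min e1 = 0" "Max e1 = b" using b by auto
  show ?thesis using assms(2) unfolding good_edge_def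
  proof
    assume "\<exists>x>0. e2 = {0,x}"
    then obtain d where d: "d > 0" "e2 = {0,d}" by blast
    have mm2: "Min e2 = 0" "Max e2 = d" using d by auto
    have "b \<noteq> d" using assms(3) b d by auto
    then consider "b < d" | "d < b" by linarith
    then show ?thesis
    proof cases
      case 1
      then have "(z = ppos 0 \<and> 0 = (0::nat)) \<or> (z = ppos d \<and> d = b)"
        using cross_nested[of 0 0 b d z] assms(4,5) mm1 mm2 b d by auto
      then show ?thesis using 1 b d by auto
    next
      case 2
      then have "(z = ppos 0 \<and> 0 = (0::nat)) \<or> (z = ppos b \<and> b = d)"
        using cross_nested[of 0 0 d b z] assms(4,5) mm1 mm2 b d by auto
      then show ?thesis using 2 b d by auto
    qed
  next
    assume "\<exists>i. e2 = {i, Suc i}"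
    then obtain i where i: "e2 = {i, Suc i}" by blast
    have mm2: "Min e2 = i" "Max e2 = Suc i" using i by auto
    consider "Suc i \<le> b" | "b \<le> i" by linarith
    then show ?thesis
    proof cases
      case 1
      have "(0,b) \<noteq> (i, Suc i)" using assms(3) b i by auto
      then have "(z = ppos 0 \<and> 0 = i) \<or> (z = ppos b \<and> b = Suc i)"
        using cross_nested[of 0 i "Suc i" b z] assms(4,5) mm1 mm2 1 by auto
      then show ?thesis using b i by auto
    next
      case 2
      have "z = ppos b \<and> b = i" using cross_disj[of 0 b i "Suc i" z] assms(4,5) mm1 mm2 2 b by auto
      then show ?thesis using b i by auto
    qed
  qed
next
  assume "\<exists>i. e1 = {i, Suc i}"
  then obtain i where i: "e1 = {i, Suc i}" by blast
  have mm1: "Min e1 = i" "Max e1 = Suc i" using i by auto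
  show ?thesis using assms(2) unfolding good_edge_def
  proof
    assume "\<exists>x>0. e2 = {0,x}"
    then obtain b where b: "b > 0" "e2 = {0,b}" by blast
    have mm2: "Min e2 = 0" "Max e2 = b" using b by auto
    consider "Suc i \<le> b" | "b \<le> i" by linarith
    then show ?thesis
    proof cases
      case 1
      have "(0,b) \<noteq> (i, Suc i)" using assms(3) b i by auto
      then have "(z = ppos 0 \<and> 0 = i) \<or> (z = ppos b \<and> b = Suc i)"
        using cross_nested[of 0 i "Suc i" b z] assms(4,5) mm1 mm2 1 by auto
      then show ?thesis using b i by auto
    next
      case 2
      have "z = ppos b \<and> b = i" using cross_disj[of 0 b i "Suc i" z] assms(4,5) mm1 mm2 2 b by auto
      then show ?thesis using b i by auto
    qed
  next
    assume "\<exists>j. e2 = {j, Suc j}"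
    then obtain j where j: "e2 = {j, Suc j}" by blast
    have mm2: "Min e2 = j" "Max e2 = Suc j" using j by auto
    have "i \<noteq> j" using assms(3) i j by auto
    then consider "Suc i \<le> j" | "Suc j \<le> i" by linarith
    then show ?thesis
    proof cases
      case 1
      have "z = ppos (Suc i) \<and> Suc i = j" using cross_disj[of i "Suc i" j "Suc j" z] assms(4,5) mm1 mm2 1 by auto
      then show ?thesis using i j by auto
    next
      case 2
      have "z = ppos (Suc j) \<and> Suc j = i" using cross_disj[of j "Suc j" i "Suc i" z] assms(4,5) mm1 mm2 2 by auto
      then show ?thesis using i j by auto
    qed
  qed
qed

lemma ppos_inj: "ppos a = ppos b \<Longrightarrow> a = b"
  by (simp add: ppos_def complex_eq_iff)

lemma drawing_above:
  assumes "\<forall>e\<in>E. good_edge e"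
  shows "drawing_image V E ppos parcs \<subseteq> {z. (Re z)^2 \<le> Im z}"
proof
  fix z assume "z \<in> drawing_image V E ppos parcs"
  then consider "z \<in> ppos ` V" | e where "e \<in> E" "z \<in> path_image (parcs e)"
    unfolding drawing_image_def by blast
  then show "z \<in> {z. (Re z)^2 \<le> Im z}"
  proof cases
    case 1 then show ?thesis by (auto simp: ppos_def)
  next
    case 2
    then have "Min e < Max e" using assms good_edge_MinMax by blast
    then show ?thesis using seg_above[of z "Min e" "Max e"] 2 by (simp add: parcs_def)
  qed
qed

lemma ray_outside:
  assumes "D \<subseteq> {z. (Re z)^2 \<le> Im z}" "t > 0"
  shows "Complex x (x^2 - t) \<in> outside D"
proof -
  define f where "f = (\<lambda>s::real. Complex x (x^2 - s))"
  define R where "R = f ` {t..}"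
  have cf: "continuous_on {t..} f" unfolding f_def
    by (intro continuous_intros)
  have cR: "connected R" unfolding R_def
    using connected_continuous_image[OF cf connected_Ici] .
  have RD: "R \<subseteq> - D"
  proof
    fix w assume "w \<in> R"
    then obtain s where "s \<ge> t" "w = f s" unfolding R_def by auto
    then have "Im w < (Re w)^2" using assms(2) by (simp add: f_def)
    then show "w \<in> - D" using assms(1) by force
  qed
  have wR: "Complex x (x^2 - t) \<in> R" unfolding R_def f_def by auto
  have sub: "R \<subseteq> connected_component_set (- D) (Complex x (x^2 - t))"
    using connected_component_maximal[OF wR cR RD] .
  have "\<not> bounded R"
  proof
    assume "bounded R"
    then obtain B where B: "\<forall>w\<in>R. norm w \<le> B" by (auto simp: bounded_iff)
    define s where "s = max t (x^2 + \<bar>B\<bar> + 1)"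
    have "f s \<in> R" unfolding R_def s_def by auto
    then have "norm (f s) \<le> B" using B by blast
    moreover have "\<bar>Im (f s)\<bar> \<le> norm (f s)" by (rule abs_Im_le_cmod)
    moreover have "Im (f s) = x^2 - s" by (simp add: f_def)
    moreover have "x^2 - s \<le> - \<bar>B\<bar> - 1" unfolding s_def by linarith
    ultimately show False by linarith
  qed
  then have "\<not> bounded (connected_component_set (- D) (Complex x (x^2 - t)))"
    using sub bounded_subset by blast
  then show ?thesis unfolding outside by simp
qed

lemma ppos_closure_outside:
  assumes "D \<subseteq> {z. (Re z)^2 \<le> Im z}"
  shows "ppos m \<in> closure (outside D)"
  unfolding closure_approachable
proof (intro allI impI)
  fix e :: real assume e: "e > 0"
  have "Complex (real m) ((real m)^2 - e/2) \<in> outside D"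
    using ray_outside[OF assms, of "e/2"] e by simp
  moreover have "dist (Complex (real m) ((real m)^2 - e/2)) (ppos m) = e/2"
  proof -
    have "Complex (real m) ((real m)^2 - e/2) - ppos m = Complex 0 (- (e/2))"
      by (simp add: ppos_def complex_eq_iff)
    then show ?thesis using e by (simp add: dist_norm complex_norm)
  qed
  ultimately show "\<exists>y\<in>outside D. dist y (ppos m) < e" using e by (intro bexI[where x="Complex (real m) ((real m)^2 - e/2)"]) auto
qed

lemma outerplanar_good:
  assumes "\<forall>e\<in>E. good_edge e \<and> e \<subseteq> V"
  shows "outerplanar V E"
  unfolding outerplanar_def
proof (intro exI conjI)
  show "plane_drawing V E ppos parcs"
    unfolding plane_drawing_def
  proof (intro conjI ballI impI)
    show "inj_on ppos V" by (auto intro: inj_onI ppos_inj)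
  next
    fix e assume eE: "e \<in> E"
    have g: "Min e < Max e" "e = {Min e, Max e}" using good_edge_MinMax assms eE by blast+
    have ne: "ppos (Min e) \<noteq> ppos (Max e)" using g ppos_inj by (metis less_irrefl)
    show "arc (parcs e)" unfolding parcs_def using ne by simp
    show "{pathstart (parcs e), pathfinish (parcs e)} = ppos ` e"
      unfolding parcs_def by (subst (3) g(2)) simp
    show "path_image (parcs e) \<inter> ppos ` V = ppos ` e"
    proof
      show "path_image (parcs e) \<inter> ppos ` V \<subseteq> ppos ` e"
      proof
        fix z assume z: "z \<in> path_image (parcs e) \<inter> ppos ` V"
        then obtain m where m: "z = ppos m" by blast
        have "m = Min e \<or> m = Max e"
          using ppos_on_seg[of m "Min e" "Max e"] z m g(1) by (simp add: parcs_def)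
        then show "z \<in> ppos ` e" using m g(2) by (metis imageI insertI1 insert_commute)
      qed
    next
      have "e \<subseteq> V" using assms eE by blast
      moreover have "ppos ` e \<subseteq> path_image (parcs e)"
        unfolding parcs_def by (subst g(2)) auto
      ultimately show "ppos ` e \<subseteq> path_image (parcs e) \<inter> ppos ` V" by blast
    qed
  next
    fix e e' assume eE: "e \<in> E" and e'E: "e' \<in> E" and ne: "e \<noteq> e'"
    show "path_image (parcs e) \<inter> path_image (parcs e') \<subseteq> ppos ` (e \<inter> e')"
      using good_cross[of e e'] assms eE e'E ne by (auto simp: parcs_def)
  qed
next
  have "drawing_image V E ppos parcs \<subseteq> {z. (Re z)^2 \<le> Im z}"
    using drawing_above assms by blast
  then show "ppos ` V \<subseteq> closure (outside (drawing_image V E ppos parcs))"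
    using ppos_closure_outside by blast
qed



definition BE :: "nat \<Rightarrow> nat \<Rightarrow> nat set set" where
  "BE p q = {{0,p},{0,q}} \<union> (\<lambda>i. {i, Suc i}) ` {p..<q}"

fun EE :: "nat \<Rightarrow> nat list \<Rightarrow> nat set set" where
  "EE off [] = {}"
| "EE off (r#bs) = BE (Suc off) (off + r) \<union> EE (off + r) bs"

fun WW :: "nat \<Rightarrow> nat list \<Rightarrow> nat set" where
  "WW off [] = {}"
| "WW off (r#bs) = (if r = 1 then {Suc off} else {}) \<union> WW (off + r) bs"

definition VV :: "nat \<Rightarrow> nat list \<Rightarrow> nat set" where
  "VV off bs = insert 0 {Suc off..off + sum_list bs}"

definition okl :: "nat list \<Rightarrow> bool" where
  "okl bs \<longleftrightarrow> (\<forall>r\<in>set bs. r = 1 \<or> r = 4 \<or> r = 6)"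

lemma okl_cons[simp]: "okl (r#bs) \<longleftrightarrow> (r = 1 \<or> r = 4 \<or> r = 6) \<and> okl bs"
  by (auto simp: okl_def)

lemma BE_sub: assumes "1 \<le> p" "p \<le> q" "e \<in> BE p q" shows "good_edge e \<and> e \<subseteq> insert 0 {p..q}"
proof -
  consider "e = {0,p}" | "e = {0,q}" | i where "p \<le> i" "i < q" "e = {i, Suc i}"
    using assms(3) unfolding BE_def by auto
  then show ?thesis
  proof cases
    case 1
    have "good_edge e" unfolding good_edge_def using 1 assms by (intro disjI1 exI[of _ p]) auto
    then show ?thesis using 1 assms by auto
  next
    case 2
    have "good_edge e" unfolding good_edge_def using 2 assms by (intro disjI1 exI[of _ q]) auto
    then show ?thesis using 2 assms by auto
  next
    case 3 then show ?thesis using assms unfolding good_edge_def by auto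
  qed
qed

lemma finite_BE: "finite (BE p q)" unfolding BE_def by simp

lemma finite_EE: "finite (EE off bs)"
  by (induction bs arbitrary: off) (auto simp: finite_BE)

lemma EE_sub: "okl bs \<Longrightarrow> e \<in> EE off bs \<Longrightarrow> good_edge e \<and> e \<subseteq> VV off bs"
proof (induction bs arbitrary: off)
  case Nil then show ?case by simp
next
  case (Cons r bs)
  show ?case
  proof (cases "e \<in> BE (Suc off) (off + r)")
    case True
    then have "good_edge e \<and> e \<subseteq> insert 0 {Suc off..off+r}"
    proof -
      have "Suc off \<le> off + r" using Cons.prems by auto
      then show ?thesis using BE_sub[of "Suc off" "off + r" e] True by simp
    qed
    moreover have "insert 0 {Suc off..off+r} \<subseteq> VV off (r#bs)" by (auto simp: VV_def)
    ultimately show ?thesis by blast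
  next
    case False
    then have "e \<in> EE (off + r) bs" using Cons.prems by simp
    then have "good_edge e \<and> e \<subseteq> VV (off + r) bs" using Cons by simp
    moreover have "VV (off + r) bs \<subseteq> VV off (r#bs)" using Cons.prems by (auto simp: VV_def)
    ultimately show ?thesis by blast
  qed
qed

lemma WW_sub: "WW off bs \<subseteq> {Suc off..off + sum_list bs}"
proof (induction bs arbitrary: off)
  case Nil then show ?case by simp
next
  case (Cons a bs)
  have "WW (off + a) bs \<subseteq> {Suc off..off + sum_list (a#bs)}"
    using Cons.IH[of "off + a"] by auto
  moreover have "(if a = 1 then {Suc off} else {}) \<subseteq> {Suc off..off + sum_list (a#bs)}" by auto
  ultimately show ?case by simp
qed

definition gblk :: "nat set \<Rightarrow> nat \<Rightarrow> nat \<Rightarrow> nat set \<Rightarrow> int" where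
  "gblk A p q Wb = 6 * int (card {e\<in>BE p q. e \<subseteq> A}) - 7 * int (card (A \<inter> {p..q}))
      + 3 * int (card (A \<inter> {p..q} \<inter> Wb))"

lemma card_filter_set: "distinct xs \<Longrightarrow> card {e \<in> set xs. P e} = length (filter P xs)"
  by (metis distinct_card distinct_filter set_filter)

lemma length_filter_sum: "int (length (filter P xs)) = sum_list (map (\<lambda>x. if P x then 1 else 0) xs)"
  by (induction xs) auto

lemma BE6: "BE p (p+5) = set [{0,p},{0,p+5},{p,p+1},{p+1,p+2},{p+2,p+3},{p+3,p+4},{p+4,p+5}]"
proof -
  have "{p..<p+5} = {p,p+1,p+2,p+3,p+4}" by auto
  then show ?thesis unfolding BE_def by (simp add: insert_commute eval_nat_numeral)
qed

lemma bool6: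
  fixes b0 b1 b2 b3 b4 b5 b6 :: bool
  shows "6 * ((if b0 \<and> b1 then 1 else 0) + (if b0 \<and> b6 then 1 else 0) + (if b1 \<and> b2 then 1 else 0)
        + (if b2 \<and> b3 then 1 else 0) + (if b3 \<and> b4 then 1 else 0) + (if b4 \<and> b5 then 1 else 0)
        + (if b5 \<and> b6 then 1 else 0)) - 7 * ((if b1 then 1 else 0) + (if b2 then 1 else 0)
        + (if b3 then 1 else 0) + (if b4 then 1 else 0) + (if b5 then 1 else 0) + (if b6 then 1 else 0)) \<le> (0::int)"
  by (cases b0; cases b1; cases b2; cases b3; cases b4; cases b5; cases b6; simp)

lemma gblk6:
  assumes "1 \<le> p"
  shows "gblk A p (p+5) {} \<le> 0 \<and> (0 \<in> A \<and> {p..p+5} \<subseteq> A \<longrightarrow> gblk A p (p+5) {} = 0)"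
proof -
  let ?xs = "[{0,p},{0,p+5},{p,p+1},{p+1,p+2},{p+2,p+3},{p+3,p+4},{p+4,p+5}] :: nat set list"
  have d: "distinct ?xs" using assms by (simp add: doubleton_eq_iff)
  have c1: "card {e\<in>BE p (p+5). e \<subseteq> A} = length (filter (\<lambda>e. e \<subseteq> A) ?xs)"
    unfolding BE6 using card_filter_set[OF d] by simp
  have iv: "{p..p+5} = set [p, p+1, p+2, p+3, p+4, p+5]" by auto
  have d2: "distinct [p, p+1, p+2, p+3, p+4, p+5]" by simp
  have c2: "card (A \<inter> {p..p+5}) = length (filter (\<lambda>x. x \<in> A) [p, p+1, p+2, p+3, p+4, p+5])"
  proof -
    have "A \<inter> {p..p+5} = {x \<in> set [p, p+1, p+2, p+3, p+4, p+5]. x \<in> A}" unfolding iv by blast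
    then show ?thesis using card_filter_set[OF d2, of "\<lambda>x. x \<in> A"] by (simp only:)
  qed
  have sub: "{p..p+5} \<subseteq> A \<longleftrightarrow> p \<in> A \<and> p+1 \<in> A \<and> p+2 \<in> A \<and> p+3 \<in> A \<and> p+4 \<in> A \<and> p+5 \<in> A"
    unfolding iv by simp
  have g: "gblk A p (p+5) {} = 6 * int (length (filter (\<lambda>e. e \<subseteq> A) ?xs))
      - 7 * int (length (filter (\<lambda>x. x \<in> A) [p, p+1, p+2, p+3, p+4, p+5]))"
    unfolding gblk_def c1 c2 by simp
  have g2: "gblk A p (p+5) {} = 6 * ((if 0\<in>A \<and> p\<in>A then 1 else 0) + (if 0\<in>A \<and> p+5\<in>A then 1 else 0) + (if p\<in>A \<and> p+1\<in>A then 1 else 0)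
        + (if p+1\<in>A \<and> p+2\<in>A then 1 else 0) + (if p+2\<in>A \<and> p+3\<in>A then 1 else 0) + (if p+3\<in>A \<and> p+4\<in>A then 1 else 0)
        + (if p+4\<in>A \<and> p+5\<in>A then 1 else 0)) - 7 * ((if p\<in>A then 1 else 0) + (if p+1\<in>A then 1 else 0)
        + (if p+2\<in>A then 1 else 0) + (if p+3\<in>A then 1 else 0) + (if p+4\<in>A then 1 else 0) + (if p+5\<in>A then 1 else 0))"
    unfolding g length_filter_sum by simp
  show ?thesis unfolding g2 sub using bool6[of "0\<in>A" "p\<in>A"] by simp
qed
lemma BE4: "BE p (p+3) = set [{0,p},{0,p+3},{p,p+1},{p+1,p+2},{p+2,p+3}]"
proof -
  have "{p..<p+3} = {p,p+1,p+2}" by auto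
  then show ?thesis unfolding BE_def by (simp add: insert_commute eval_nat_numeral)
qed

lemma BE1: "BE p p = {{0,p}}" unfolding BE_def by auto

lemma bool4:
  fixes b0 b1 b2 b3 b4 :: bool
  shows "6 * ((if b0 \<and> b1 then 1 else 0) + (if b0 \<and> b4 then 1 else 0) + (if b1 \<and> b2 then 1 else 0)
        + (if b2 \<and> b3 then 1 else 0) + (if b3 \<and> b4 then 1 else 0)) - 7 * ((if b1 then 1 else 0) + (if b2 then 1 else 0)
        + (if b3 then 1 else 0) + (if b4 then 1 else 0)) \<le> (if b0 then 2 else (0::int))"
  by (cases b0; cases b1; cases b2; cases b3; cases b4; simp)

lemma gblk4:
  assumes "1 \<le> p"
  shows "gblk A p (p+3) {} \<le> (if 0 \<in> A then 2 else 0) \<and> (0 \<in> A \<and> {p..p+3} \<subseteq> A \<longrightarrow> gblk A p (p+3) {} = 2)"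
proof -
  let ?xs = "[{0,p},{0,p+3},{p,p+1},{p+1,p+2},{p+2,p+3}] :: nat set list"
  have d: "distinct ?xs" using assms by (simp add: doubleton_eq_iff)
  have c1: "card {e\<in>BE p (p+3). e \<subseteq> A} = length (filter (\<lambda>e. e \<subseteq> A) ?xs)"
    unfolding BE4 using card_filter_set[OF d] by simp
  have iv: "{p..p+3} = set [p, p+1, p+2, p+3]" by auto
  have d2: "distinct [p, p+1, p+2, p+3]" by simp
  have c2: "card (A \<inter> {p..p+3}) = length (filter (\<lambda>x. x \<in> A) [p, p+1, p+2, p+3])"
  proof -
    have "A \<inter> {p..p+3} = {x \<in> set [p, p+1, p+2, p+3]. x \<in> A}" unfolding iv by blast
    then show ?thesis using card_filter_set[OF d2, of "\<lambda>x. x \<in> A"] by (simp only:)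
  qed
  have sub: "{p..p+3} \<subseteq> A \<longleftrightarrow> p \<in> A \<and> p+1 \<in> A \<and> p+2 \<in> A \<and> p+3 \<in> A"
    unfolding iv by simp
  have g: "gblk A p (p+3) {} = 6 * int (length (filter (\<lambda>e. e \<subseteq> A) ?xs))
      - 7 * int (length (filter (\<lambda>x. x \<in> A) [p, p+1, p+2, p+3]))"
    unfolding gblk_def c1 c2 by simp
  have g2: "gblk A p (p+3) {} = 6 * ((if 0\<in>A \<and> p\<in>A then 1 else 0) + (if 0\<in>A \<and> p+3\<in>A then 1 else 0) + (if p\<in>A \<and> p+1\<in>A then 1 else 0)
        + (if p+1\<in>A \<and> p+2\<in>A then 1 else 0) + (if p+2\<in>A \<and> p+3\<in>A then 1 else 0)) - 7 * ((if p\<in>A then 1 else 0) + (if p+1\<in>A then 1 else 0)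
        + (if p+2\<in>A then 1 else 0) + (if p+3\<in>A then 1 else 0))"
    unfolding g length_filter_sum by simp
  show ?thesis unfolding g2 sub using bool4[of "0\<in>A" "p\<in>A"] by simp
qed

lemma gblk1:
  assumes "1 \<le> p"
  shows "gblk A p p {p} \<le> (if 0 \<in> A then 2 else 0) \<and> (0 \<in> A \<and> {p..p} \<subseteq> A \<longrightarrow> gblk A p p {p} = 2)"
proof -
  have c1: "{e\<in>BE p p. e \<subseteq> A} = (if 0 \<in> A \<and> p \<in> A then {{0,p}} else {})" unfolding BE1 by auto
  have c2: "A \<inter> {p..p} = (if p \<in> A then {p} else {})" by auto
  have c3: "A \<inter> {p..p} \<inter> {p} = (if p \<in> A then {p} else {})" by auto
  show ?thesis unfolding gblk_def c1 c2 c3 by auto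
qed

lemma indep6:
  assumes "1 \<le> p" "0 \<in> C" "\<forall>e\<in>BE p (p+5). \<not> e \<subseteq> C"
  shows "card (C \<inter> {p..p+5}) \<le> 2"
proof -
  have iv: "{p..p+5} = set [p, p+1, p+2, p+3, p+4, p+5]" by auto
  have d2: "distinct [p, p+1, p+2, p+3, p+4, p+5]" by simp
  have c2: "card (C \<inter> {p..p+5}) = length (filter (\<lambda>x. x \<in> C) [p, p+1, p+2, p+3, p+4, p+5])"
  proof -
    have "C \<inter> {p..p+5} = {x \<in> set [p, p+1, p+2, p+3, p+4, p+5]. x \<in> C}" unfolding iv by blast
    then show ?thesis using card_filter_set[OF d2, of "\<lambda>x. x \<in> C"] by (simp only:)
  qed
  have h: "p \<notin> C" "p+5 \<notin> C" "\<not> (p+1 \<in> C \<and> p+2 \<in> C)" "\<not> (p+3 \<in> C \<and> p+4 \<in> C)"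
    using assms(2,3) unfolding BE6 by auto
  have "int (card (C \<inter> {p..p+5})) = (if p\<in>C then 1 else 0) + (if p+1\<in>C then 1 else 0)
        + (if p+2\<in>C then 1 else 0) + (if p+3\<in>C then 1 else 0) + (if p+4\<in>C then 1 else 0) + (if p+5\<in>C then 1 else 0)"
    unfolding c2 length_filter_sum by simp
  also have "\<dots> \<le> 2" using h by (cases "p+1 \<in> C"; cases "p+2 \<in> C"; cases "p+3 \<in> C"; cases "p+4 \<in> C"; simp)
  finally show ?thesis by simp
qed

lemma indep4:
  assumes "1 \<le> p" "0 \<in> C" "\<forall>e\<in>BE p (p+3). \<not> e \<subseteq> C"
  shows "card (C \<inter> {p..p+3}) \<le> 1"
proof -
  have iv: "{p..p+3} = set [p, p+1, p+2, p+3]" by auto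
  have d2: "distinct [p, p+1, p+2, p+3]" by simp
  have c2: "card (C \<inter> {p..p+3}) = length (filter (\<lambda>x. x \<in> C) [p, p+1, p+2, p+3])"
  proof -
    have "C \<inter> {p..p+3} = {x \<in> set [p, p+1, p+2, p+3]. x \<in> C}" unfolding iv by blast
    then show ?thesis using card_filter_set[OF d2, of "\<lambda>x. x \<in> C"] by (simp only:)
  qed
  have h: "p \<notin> C" "p+3 \<notin> C" "\<not> (p+1 \<in> C \<and> p+2 \<in> C)"
    using assms(2,3) unfolding BE4 by auto
  have "int (card (C \<inter> {p..p+3})) = (if p\<in>C then 1 else 0) + (if p+1\<in>C then 1 else 0)
        + (if p+2\<in>C then 1 else 0) + (if p+3\<in>C then 1 else 0)"
    unfolding c2 length_filter_sum by simp
  also have "\<dots> \<le> 1" using h by (cases "p+1 \<in> C"; cases "p+2 \<in> C"; simp)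
  finally show ?thesis by simp
qed

lemma indep1:
  assumes "0 \<in> C" "\<forall>e\<in>BE p p. \<not> e \<subseteq> C"
  shows "card (C \<inter> {p..p}) \<le> 0"
proof -
  have "p \<notin> C" using assms unfolding BE1 by auto
  then show ?thesis by simp
qed

definition wt :: "nat \<Rightarrow> int" where "wt r = (if r = 6 then 0 else 2)"
definition dt :: "nat \<Rightarrow> nat" where "dt r = (if r = 1 then 0 else if r = 4 then 1 else 2)"

definition rw :: "nat set set \<Rightarrow> nat set \<Rightarrow> nat set \<Rightarrow> int" where
  "rw E W A = 6 * int (card {e\<in>E. e \<subseteq> A}) - 7 * int (card A) + 3 * int (card (A \<inter> W))"

lemma gblk_gen:
  assumes "r = 1 \<or> r = 4 \<or> r = 6"
  shows "gblk A (Suc off) (off+r) (if r = 1 then {Suc off} else {}) \<le> (if 0 \<in> A then wt r else 0)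
    \<and> (0 \<in> A \<and> {Suc off..off+r} \<subseteq> A \<longrightarrow> gblk A (Suc off) (off+r) (if r = 1 then {Suc off} else {}) = wt r)"
proof -
  consider "r = 1" | "r = 4" | "r = 6" using assms by blast
  then show ?thesis
  proof cases
    case 1
    then show ?thesis using gblk1[of "Suc off" A] by (cases "0 \<in> A") (simp_all add: wt_def)
  next
    case 2
    have "off + r = Suc off + 3" using 2 by simp
    then show ?thesis using gblk4[of "Suc off" A] 2 by (cases "0 \<in> A") (simp_all add: wt_def add.commute)
  next
    case 3
    have "off + r = Suc off + 5" using 3 by simp
    then show ?thesis using gblk6[of "Suc off" A] 3 by (cases "0 \<in> A") (simp_all add: wt_def add.commute)
  qed
qed

lemma EE_nz: "okl bs \<Longrightarrow> e \<in> EE off bs \<Longrightarrow> \<exists>x\<in>e. x \<noteq> 0"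
  using EE_sub[of bs e off] unfolding good_edge_def by auto

lemma rw_split:
  assumes ok: "okl (r#bs)" and A: "A \<subseteq> VV off (r#bs)"
  defines "B \<equiv> {Suc off..off+r}"
  shows "rw (EE off (r#bs)) (WW off (r#bs)) A
       = gblk A (Suc off) (off+r) (if r = 1 then {Suc off} else {}) + rw (EE (off+r) bs) (WW (off+r) bs) (A - B)"
proof -
  let ?Wb = "if r = 1 then {Suc off} else {}"
  have okbs: "okl bs" and r1: "1 \<le> r" using ok by auto
  have finA: "finite A" using A finite_subset by (auto simp: VV_def)
  have E'loc: "e \<subseteq> insert 0 {Suc (off+r)..}" if "e \<in> EE (off+r) bs" for e
    using EE_sub[OF okbs that] by (auto simp: VV_def)
  have BEloc: "e \<subseteq> insert 0 B" if "e \<in> BE (Suc off) (off+r)" for e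
    using BE_sub[OF _ _ that] r1 unfolding B_def by auto
  have e1: "{e \<in> EE off (r#bs). e \<subseteq> A} = {e\<in>BE (Suc off) (off+r). e \<subseteq> A} \<union> {e\<in>EE (off+r) bs. e \<subseteq> A - B}"
  proof -
    have "e \<subseteq> A \<longleftrightarrow> e \<subseteq> A - B" if "e \<in> EE (off+r) bs" for e
      using E'loc[OF that] unfolding B_def by auto
    then show ?thesis by auto
  qed
  have disj: "{e\<in>BE (Suc off) (off+r). e \<subseteq> A} \<inter> {e\<in>EE (off+r) bs. e \<subseteq> A - B} = {}"
  proof (rule ccontr)
    assume "\<not> ?thesis"
    then obtain e where e: "e \<in> BE (Suc off) (off+r)" "e \<in> EE (off+r) bs" by blast
    obtain x where x: "x \<in> e" "x \<noteq> 0" using EE_nz[OF okbs e(2)] by blast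
    have "x \<in> B" using BEloc[OF e(1)] x by blast
    moreover have "x \<in> {Suc (off+r)..}" using E'loc[OF e(2)] x by blast
    ultimately show False unfolding B_def by simp
  qed
  have fin1: "finite {e\<in>BE (Suc off) (off+r). e \<subseteq> A}" using finite_BE by simp
  have fin2: "finite {e\<in>EE (off+r) bs. e \<subseteq> A - B}" using finite_EE by simp
  have ce: "card {e \<in> EE off (r#bs). e \<subseteq> A} = card {e\<in>BE (Suc off) (off+r). e \<subseteq> A} + card {e\<in>EE (off+r) bs. e \<subseteq> A - B}"
    unfolding e1 using card_Un_disjoint[OF fin1 fin2 disj] .
  have cA: "card A = card (A \<inter> B) + card (A - B)"
    using finA by (metis Diff_Diff_Int card_Diff_subset_Int card_mono Int_lower1 add.commute le_add_diff_inverse finite_Int card_Diff_subset Int_commute)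
  have WWs: "WW (off+r) bs \<subseteq> {Suc (off + r)..}" using WW_sub[of "off+r" bs] by auto
  have wsplit: "A \<inter> WW off (r#bs) = (A \<inter> B \<inter> ?Wb) \<union> ((A - B) \<inter> WW (off+r) bs)"
    using WWs r1 unfolding B_def by auto
  have wdisj: "(A \<inter> B \<inter> ?Wb) \<inter> ((A - B) \<inter> WW (off+r) bs) = {}" by auto
  have cW: "card (A \<inter> WW off (r#bs)) = card (A \<inter> B \<inter> ?Wb) + card ((A - B) \<inter> WW (off+r) bs)"
    unfolding wsplit by (rule card_Un_disjoint) (use finA wdisj in auto)
  show ?thesis unfolding rw_def gblk_def ce cA cW B_def by simp
qed

lemma rho_ind:
  assumes "okl bs" "A \<subseteq> VV off bs"
  shows "rw (EE off bs) (WW off bs) A \<le> (if 0 \<in> A then -7 + sum_list (map wt bs) else 0)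
     \<and> (A = VV off bs \<longrightarrow> rw (EE off bs) (WW off bs) A = -7 + sum_list (map wt bs))"
  using assms
proof (induction bs arbitrary: off A)
  case Nil
  then have "A \<subseteq> {0}" by (auto simp: VV_def)
  then have "A = {} \<or> A = {0}" by blast
  then show ?case by (auto simp: rw_def VV_def)
next
  case (Cons r bs)
  define B where "B = {Suc off..off+r}"
  have okr: "r = 1 \<or> r = 4 \<or> r = 6" and okbs: "okl bs" using Cons.prems by auto
  have sp: "rw (EE off (r#bs)) (WW off (r#bs)) A
       = gblk A (Suc off) (off+r) (if r = 1 then {Suc off} else {}) + rw (EE (off+r) bs) (WW (off+r) bs) (A - B)"
    using rw_split[OF Cons.prems] unfolding B_def .
  have sub: "A - B \<subseteq> VV (off+r) bs" using Cons.prems(2) unfolding B_def VV_def by auto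
  have IH: "rw (EE (off+r) bs) (WW (off+r) bs) (A - B) \<le> (if 0 \<in> A - B then -7 + sum_list (map wt bs) else 0)
     \<and> (A - B = VV (off+r) bs \<longrightarrow> rw (EE (off+r) bs) (WW (off+r) bs) (A - B) = -7 + sum_list (map wt bs))"
    using Cons.IH[OF okbs sub] .
  have z: "0 \<in> A - B \<longleftrightarrow> 0 \<in> A" unfolding B_def by auto
  have G: "gblk A (Suc off) (off+r) (if r = 1 then {Suc off} else {}) \<le> (if 0 \<in> A then wt r else 0)
    \<and> (0 \<in> A \<and> B \<subseteq> A \<longrightarrow> gblk A (Suc off) (off+r) (if r = 1 then {Suc off} else {}) = wt r)"
    using gblk_gen[OF okr] unfolding B_def .
  have part1: "rw (EE off (r#bs)) (WW off (r#bs)) A \<le> (if 0 \<in> A then -7 + sum_list (map wt (r#bs)) else 0)"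
    using sp IH G z by (cases "0 \<in> A") auto
  have part2: "rw (EE off (r#bs)) (WW off (r#bs)) A = -7 + sum_list (map wt (r#bs))" if "A = VV off (r#bs)"
  proof -
    have "A - B = VV (off+r) bs" using that okr unfolding B_def VV_def by auto
    moreover have "0 \<in> A" "B \<subseteq> A" using that unfolding B_def VV_def by auto
    ultimately show ?thesis using sp IH G by auto
  qed
  show ?case using part1 part2 by blast
qed



lemma E'loc_gen: "okl bs \<Longrightarrow> e \<in> EE off bs \<Longrightarrow> e \<subseteq> insert 0 {Suc off..}"
  using EE_sub[of bs e off] by (auto simp: VV_def)

lemma indep_ind:
  assumes "okl bs" "C \<subseteq> VV off bs" "0 \<in> C" "\<forall>e\<in>EE off bs. \<not> e \<subseteq> C"
  shows "card C \<le> 1 + sum_list (map dt bs)"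
  using assms
proof (induction bs arbitrary: off C)
  case Nil
  then have "C = {0}" by (auto simp: VV_def)
  then show ?case by simp
next
  case (Cons r bs)
  define B where "B = {Suc off..off+r}"
  have okr: "r = 1 \<or> r = 4 \<or> r = 6" and okbs: "okl bs" using Cons.prems by auto
  have finC: "finite C" using Cons.prems(2) finite_subset by (auto simp: VV_def)
  have cC: "card C = card (C \<inter> B) + card (C - B)"
    using finC by (metis card_Un_disjoint Diff_disjoint Int_Diff_Un Int_Diff_disjoint finite_Int finite_Diff)
  have sub: "C - B \<subseteq> VV (off+r) bs" using Cons.prems(2) unfolding B_def VV_def by auto
  have "card (C - B) \<le> 1 + sum_list (map dt bs)"
    using Cons.IH[OF okbs sub] Cons.prems(3,4) unfolding B_def by auto
  moreover have "card (C \<inter> B) \<le> dt r"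
  proof -
    have nb: "\<forall>e\<in>BE (Suc off) (off+r). \<not> e \<subseteq> C" using Cons.prems(4) by auto
    consider "r = 1" | "r = 4" | "r = 6" using okr by blast
    then show ?thesis
    proof cases
      case 1 then show ?thesis using indep1[OF Cons.prems(3), of "Suc off"] nb unfolding B_def dt_def by simp
    next
      case 2
      have "off + r = Suc off + 3" using 2 by simp
      then show ?thesis using indep4[OF _ Cons.prems(3), of "Suc off"] nb 2 unfolding B_def dt_def by (simp add: add.commute)
    next
      case 3
      have "off + r = Suc off + 5" using 3 by simp
      then show ?thesis using indep6[OF _ Cons.prems(3), of "Suc off"] nb 3 unfolding B_def dt_def by (simp add: add.commute)
    qed
  qed
  ultimately show ?case using cC by simp
qed

lemma WW_card: "okl bs \<Longrightarrow> card (WW off bs) = length (filter (\<lambda>r. r = 1) bs)"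
proof (induction bs arbitrary: off)
  case Nil then show ?case by simp
next
  case (Cons r bs)
  have "Suc off \<notin> WW (off + r) bs" using WW_sub[of "off+r" bs] Cons.prems by auto
  moreover have "finite (WW (off + r) bs)" using WW_sub[of "off+r" bs] finite_subset by blast
  ultimately show ?case using Cons by auto
qed


lemma BE_mem1: "{0,p} \<in> BE p q" unfolding BE_def by blast
lemma BE_mem2: "{0,q} \<in> BE p q" unfolding BE_def by blast
lemma BE_mem3: "p \<le> i \<Longrightarrow> i < q \<Longrightarrow> {i, Suc i} \<in> BE p q"
  unfolding BE_def by (intro UnI2 image_eqI[of _ _ i]) auto

lemma deg_loc:
  assumes "okl bs" "x \<in> {Suc off..off + sum_list bs}"
  shows "(x \<in> WW off bs \<longrightarrow> {e\<in>EE off bs. x \<in> e} = {{0,x}})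
       \<and> (x \<notin> WW off bs \<longrightarrow> (\<exists>e1 e2. e1 \<in> EE off bs \<and> e2 \<in> EE off bs \<and> e1 \<noteq> e2 \<and> x \<in> e1 \<and> x \<in> e2))"
  using assms
proof (induction bs arbitrary: off)
  case Nil then show ?case by simp
next
  case (Cons r bs)
  define B where "B = {Suc off..off+r}"
  have okr: "r = 1 \<or> r = 4 \<or> r = 6" and okbs: "okl bs" using Cons.prems by auto
  have E'loc: "e \<subseteq> insert 0 {Suc (off+r)..}" if "e \<in> EE (off+r) bs" for e
    using E'loc_gen[OF okbs that] .
  have BEloc: "e \<subseteq> insert 0 B" if "e \<in> BE (Suc off) (off+r)" for e
  proof -
    have "1 \<le> r" using okr by auto
    then show ?thesis using BE_sub[OF _ _ that] unfolding B_def by auto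
  qed
  have WWs: "WW (off+r) bs \<subseteq> {Suc (off + r)..}" using WW_sub[of "off+r" bs] by auto
  show ?case
  proof (cases "x \<in> B")
    case True
    have x0: "x \<noteq> 0" using True unfolding B_def by auto
    have inc: "{e\<in>EE off (r#bs). x \<in> e} = {e\<in>BE (Suc off) (off+r). x \<in> e}"
    proof -
      have "x \<notin> e" if "e \<in> EE (off+r) bs" for e using E'loc[OF that] True x0 unfolding B_def by auto
      then show ?thesis by auto
    qed
    have xW: "x \<in> WW off (r#bs) \<longleftrightarrow> r = 1"
    proof -
      have "x \<notin> WW (off+r) bs" using WWs True unfolding B_def by auto
      moreover have "r = 1 \<Longrightarrow> x = Suc off" using True unfolding B_def by auto
      ultimately show ?thesis by auto
    qed
    show ?thesis
    proof (cases "r = 1")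
      case True
      then have "x = Suc off" using \<open>x \<in> B\<close> unfolding B_def by auto
      moreover have bb: "BE (Suc off) (off+r) = {{0, Suc off}}" using BE1[of "Suc off"] True by simp
      ultimately have "{e\<in>BE (Suc off) (off+r). x \<in> e} = {{0,x}}" by (simp add: Collect_conv_if)
      then show ?thesis using inc xW True by (simp del: EE.simps)
    next
      case False
      then have r4: "r \<ge> 4" using okr by auto
      have "\<exists>e1 e2. e1 \<in> BE (Suc off) (off+r) \<and> e2 \<in> BE (Suc off) (off+r) \<and> e1 \<noteq> e2 \<and> x \<in> e1 \<and> x \<in> e2"
      proof (cases "x = Suc off")
        case True
        have "{0,x} \<in> BE (Suc off) (off+r)" using True BE_mem1 by simp
        moreover have "{x, Suc x} \<in> BE (Suc off) (off+r)" using True r4 by (intro BE_mem3) auto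
        moreover have "{0,x} \<noteq> {x, Suc x}" using x0 by (auto simp: doubleton_eq_iff)
        ultimately show ?thesis by (intro exI[of _ "{0,x}"] exI[of _ "{x, Suc x}"]) simp
      next
        case False
        then have xs: "Suc off < x" "x \<le> off + r" using \<open>x \<in> B\<close> unfolding B_def by auto
        have m: "{x - 1, x} \<in> BE (Suc off) (off+r)"
        proof -
          have "x - 1 \<in> {Suc off..<off+r}" using xs by auto
          moreover have "{x - 1, x} = {x - 1, Suc (x - 1)}" using xs by auto
          ultimately show ?thesis using BE_mem3[of "Suc off" "x - 1" "off + r"] by simp
        qed
        show ?thesis
        proof (cases "x = off + r")
          case True
          have "{0,x} \<in> BE (Suc off) (off+r)" using True BE_mem2 by simp
          moreover have "{x - 1, x} \<noteq> {0, x}" using xs by (auto simp: doubleton_eq_iff)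
          ultimately show ?thesis using m by (intro exI[of _ "{x - 1, x}"] exI[of _ "{0,x}"]) simp
        next
          case False
          have "{x, Suc x} \<in> BE (Suc off) (off+r)" using False xs by (intro BE_mem3) auto
          moreover have "{x - 1, x} \<noteq> {x, Suc x}" using xs by (auto simp: doubleton_eq_iff)
          ultimately show ?thesis using m by (intro exI[of _ "{x - 1, x}"] exI[of _ "{x, Suc x}"]) simp
        qed
      qed
      then obtain e1 e2 where ee: "e1 \<in> BE (Suc off) (off+r)" "e2 \<in> BE (Suc off) (off+r)" "e1 \<noteq> e2" "x \<in> e1" "x \<in> e2"
        by (elim exE conjE)
      have "e1 \<in> EE off (r#bs)" "e2 \<in> EE off (r#bs)" using ee by simp_all
      then have "\<exists>e1 e2. e1 \<in> EE off (r#bs) \<and> e2 \<in> EE off (r#bs) \<and> e1 \<noteq> e2 \<and> x \<in> e1 \<and> x \<in> e2"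
        using ee by (intro exI[of _ e1] exI[of _ e2]) simp
      moreover have "x \<notin> WW off (r#bs)" using xW False by simp
      ultimately show ?thesis by (simp del: EE.simps)
    qed
  next
    case False
    then have xr: "x \<in> {Suc (off+r)..off + r + sum_list bs}" using Cons.prems(2) unfolding B_def by auto
    have x0: "x \<noteq> 0" using xr by auto
    have inc: "{e\<in>EE off (r#bs). x \<in> e} = {e\<in>EE (off+r) bs. x \<in> e}"
    proof -
      have "x \<notin> e" if "e \<in> BE (Suc off) (off+r)" for e using BEloc[OF that] False x0 by auto
      then show ?thesis by auto
    qed
    have xW: "x \<in> WW off (r#bs) \<longleftrightarrow> x \<in> WW (off+r) bs"
    proof -
      have "r = 1 \<Longrightarrow> x \<noteq> Suc off" using False unfolding B_def by auto
      then show ?thesis by auto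
    qed
    have IH: "(x \<in> WW (off+r) bs \<longrightarrow> {e\<in>EE (off+r) bs. x \<in> e} = {{0,x}})
       \<and> (x \<notin> WW (off+r) bs \<longrightarrow> (\<exists>e1 e2. e1 \<in> EE (off+r) bs \<and> e2 \<in> EE (off+r) bs \<and> e1 \<noteq> e2 \<and> x \<in> e1 \<and> x \<in> e2))"
      using Cons.IH[OF okbs] xr by simp
    show ?thesis
    proof (intro conjI impI)
      assume "x \<in> WW off (r#bs)"
      then show "{e\<in>EE off (r#bs). x \<in> e} = {{0,x}}" using IH inc xW by (simp del: EE.simps)
    next
      assume "x \<notin> WW off (r#bs)"
      then obtain e1 e2 where ee: "e1 \<in> EE (off+r) bs" "e2 \<in> EE (off+r) bs" "e1 \<noteq> e2" "x \<in> e1" "x \<in> e2"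
        using IH xW by (auto simp del: EE.simps)
      have "e1 \<in> EE off (r#bs)" "e2 \<in> EE off (r#bs)" using ee by simp_all
      then show "\<exists>e1 e2. e1 \<in> EE off (r#bs) \<and> e2 \<in> EE off (r#bs) \<and> e1 \<noteq> e2 \<and> x \<in> e1 \<and> x \<in> e2"
        using ee by (intro exI[of _ e1] exI[of _ e2]) simp
    qed
  qed
qed


lemma tri_ind:
  assumes "okl bs" "a \<noteq> 0" "{0,a} \<in> EE off bs" "{0,Suc a} \<in> EE off bs" "{a, Suc a} \<in> EE off bs"
  shows False
  using assms
proof (induction bs arbitrary: off)
  case Nil then show ?case by simp
next
  case (Cons r bs)
  define B where "B = {Suc off..off+r}"
  have okr: "r = 1 \<or> r = 4 \<or> r = 6" and okbs: "okl bs" using Cons.prems by auto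
  have E'loc: "e \<subseteq> insert 0 {Suc (off+r)..}" if "e \<in> EE (off+r) bs" for e
    using E'loc_gen[OF okbs that] .
  have BEloc: "e \<subseteq> insert 0 B" if "e \<in> BE (Suc off) (off+r)" for e
  proof -
    have "1 \<le> r" using okr by auto
    then show ?thesis using BE_sub[OF _ _ that] unfolding B_def by auto
  qed
  show ?case
  proof (cases "{a, Suc a} \<in> EE (off+r) bs")
    case True
    then have aa: "a \<ge> Suc (off + r)" using E'loc[OF True] Cons.prems(2) by auto
    have "{0,a} \<notin> BE (Suc off) (off+r)" using BEloc aa unfolding B_def by force
    then have 1: "{0,a} \<in> EE (off+r) bs" using Cons.prems(3) by auto
    have "{0,Suc a} \<notin> BE (Suc off) (off+r)" using BEloc aa unfolding B_def by force
    then have 2: "{0,Suc a} \<in> EE (off+r) bs" using Cons.prems(4) by auto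
    show False using Cons.IH[OF okbs Cons.prems(2) 1 2 True] .
  next
    case False
    then have "{a, Suc a} \<in> BE (Suc off) (off+r)" using Cons.prems(5) by auto
    then have aB: "a \<in> B" "Suc a \<in> B" using BEloc Cons.prems(2) by auto
    have "{0,a} \<notin> EE (off+r) bs" using E'loc aB Cons.prems(2) unfolding B_def by force
    then have 1: "{0,a} \<in> BE (Suc off) (off+r)" using Cons.prems(3) by auto
    have "{0,Suc a} \<notin> EE (off+r) bs" using E'loc aB unfolding B_def by force
    then have 2: "{0,Suc a} \<in> BE (Suc off) (off+r)" using Cons.prems(4) by auto
    have n: "{0, y} \<in> BE (Suc off) (off+r) \<Longrightarrow> y \<noteq> 0 \<Longrightarrow> y = Suc off \<or> y = off + r" for y
      unfolding BE_def by (auto simp: doubleton_eq_iff)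
    have "a = Suc off \<or> a = off + r" using n[OF 1 Cons.prems(2)] .
    moreover have "Suc a = Suc off \<or> Suc a = off + r" using n[OF 2] by simp
    ultimately show False using okr aB unfolding B_def by auto
  qed
qed



definition bsl :: "nat \<Rightarrow> nat \<Rightarrow> nat list" where
  "bsl l k = replicate l 1 @ replicate (5 - l) 4 @ replicate k 6"

lemma okl_bsl: "okl (bsl l k)" by (auto simp: okl_def bsl_def)

lemma edge_pair: "okl bs \<Longrightarrow> {x,y} \<in> EE off bs \<Longrightarrow> x = 0 \<or> y = 0 \<or> y = Suc x \<or> x = Suc y"
  using EE_sub[of bs "{x,y}" off] unfolding good_edge_def by (auto simp: doubleton_eq_iff)

lemma tri0:
  assumes "okl bs" "x \<noteq> 0" "y \<noteq> 0" "{0,x} \<in> EE off bs" "{0,y} \<in> EE off bs" "{x,y} \<in> EE off bs"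
  shows False
proof -
  have "y = Suc x \<or> x = Suc y" using edge_pair[OF assms(1,6)] assms(2,3) by auto
  then show False
  proof
    assume "y = Suc x"
    then show False using tri_ind[OF assms(1,2)] assms(4-6) by simp
  next
    assume h: "x = Suc y"
    have "{y, Suc y} \<in> EE off bs" using assms(6) h by (simp add: insert_commute)
    then show False using tri_ind[OF assms(1,3)] assms(4,5) h by simp
  qed
qed

lemma tri_free: "okl bs \<Longrightarrow> triangle_free (EE off bs)"
  unfolding triangle_free_def
proof (intro notI, elim exE conjE)
  fix a b c assume ok: "okl bs" and d: "a \<noteq> b" "b \<noteq> c" "a \<noteq> c"
    and e: "{a,b} \<in> EE off bs" "{b,c} \<in> EE off bs" "{a,c} \<in> EE off bs"
  have e': "{b,a} \<in> EE off bs" "{c,b} \<in> EE off bs" "{c,a} \<in> EE off bs"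
    using e by (simp_all add: insert_commute)
  consider "a = 0" | "b = 0" | "c = 0" | "a \<noteq> 0 \<and> b \<noteq> 0 \<and> c \<noteq> 0" by blast
  then show False
  proof cases
    case 1 then show False using tri0[OF ok, of b c off] d e by simp
  next
    case 2 then show False using tri0[OF ok, of a c off] d e e' by simp
  next
    case 3 then show False using tri0[OF ok, of a b off] d e e' by simp
  next
    case 4
    have "b = Suc a \<or> a = Suc b" using edge_pair[OF ok e(1)] 4 by auto
    moreover have "c = Suc b \<or> b = Suc c" using edge_pair[OF ok e(2)] 4 by auto
    moreover have "c = Suc a \<or> a = Suc c" using edge_pair[OF ok e(3)] 4 by auto
    ultimately show False using d by auto
  qed
qed

lemma simple_EE: "okl bs \<Longrightarrow> simple_graph (VV off bs) (EE off bs)"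
  unfolding simple_graph_def
proof (intro conjI ballI)
  show "finite (VV off bs)" by (simp add: VV_def)
next
  fix e assume ok: "okl bs" and e: "e \<in> EE off bs"
  have g: "good_edge e" and s: "e \<subseteq> VV off bs" using EE_sub[OF ok e] by auto
  have "Min e < Max e" "e = {Min e, Max e}" using good_edge_MinMax[OF g] by auto
  then show "\<exists>u v. e = {u, v} \<and> u \<noteq> v \<and> u \<in> VV off bs \<and> v \<in> VV off bs"
    using s by (intro exI[of _ "Min e"] exI[of _ "Max e"]) auto
qed

lemma V1_eq:
  assumes ok: "okl bs" and len: "bs = r1 # r2 # rest"
  shows "V1 (VV 0 bs) (EE 0 bs) = WW 0 bs"
proof -
  have fin: "finite (EE 0 bs)" by (rule finite_EE)
  have two: "card {e\<in>EE 0 bs. x \<in> e} \<ge> 2" if "e1 \<in> EE 0 bs" "e2 \<in> EE 0 bs" "e1 \<noteq> e2" "x \<in> e1" "x \<in> e2" for x e1 e2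
  proof -
    have "{e1,e2} \<subseteq> {e\<in>EE 0 bs. x \<in> e}" using that by auto
    moreover have "finite {e\<in>EE 0 bs. x \<in> e}" using fin by simp
    ultimately have "card {e1,e2} \<le> card {e\<in>EE 0 bs. x \<in> e}" by (rule card_mono[rotated])
    then show ?thesis using that(3) by simp
  qed
  have r1: "r1 \<ge> 1" using ok len by auto
  have d0: "card {e\<in>EE 0 bs. 0 \<in> e} \<ge> 2"
  proof -
    have "{0, Suc 0} \<in> BE (Suc 0) r1" using BE_mem1 .
    then have a: "{0, Suc 0} \<in> EE 0 bs" using len by simp
    have "{0, Suc r1} \<in> BE (Suc r1) (r1 + r2)" using BE_mem1 .
    then have b: "{0, Suc r1} \<in> EE 0 bs" using len by simp
    have "{0, Suc 0} \<noteq> {0, Suc r1}" using r1 by (auto simp: doubleton_eq_iff)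
    then show ?thesis using two[OF a b] by simp
  qed
  show ?thesis
  proof
    show "V1 (VV 0 bs) (EE 0 bs) \<subseteq> WW 0 bs"
    proof
      fix x assume x: "x \<in> V1 (VV 0 bs) (EE 0 bs)"
      then have xV: "x \<in> VV 0 bs" and dg: "card {e\<in>EE 0 bs. x \<in> e} = 1"
        unfolding V1_def degree_def by auto
      have x0: "x \<noteq> 0"
      proof
        assume "x = 0"
        then show False using dg d0 by simp
      qed
      then have xr: "x \<in> {Suc 0..0 + sum_list bs}" using xV by (auto simp: VV_def)
      show "x \<in> WW 0 bs"
      proof (rule ccontr)
        assume "x \<notin> WW 0 bs"
        have "\<exists>e1 e2. e1 \<in> EE 0 bs \<and> e2 \<in> EE 0 bs \<and> e1 \<noteq> e2 \<and> x \<in> e1 \<and> x \<in> e2"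
          by (rule mp[OF conjunct2[OF deg_loc[OF ok xr]] \<open>x \<notin> WW 0 bs\<close>])
        then obtain e1 e2 where "e1 \<in> EE 0 bs" "e2 \<in> EE 0 bs" "e1 \<noteq> e2" "x \<in> e1" "x \<in> e2"
          by (elim exE conjE)
        then show False using two dg by fastforce
      qed
    qed
  next
    show "WW 0 bs \<subseteq> V1 (VV 0 bs) (EE 0 bs)"
    proof
      fix x assume x: "x \<in> WW 0 bs"
      then have xr: "x \<in> {Suc 0..0 + sum_list bs}" using WW_sub by blast
      have "{e\<in>EE 0 bs. x \<in> e} = {{0,x}}" by (rule mp[OF conjunct1[OF deg_loc[OF ok xr]] x])
      then show "x \<in> V1 (VV 0 bs) (EE 0 bs)" using xr unfolding V1_def degree_def VV_def by auto
    qed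
  qed
qed


lemma sum_bsl: "l \<le> 5 \<Longrightarrow> sum_list (bsl l k) = 20 - 3*l + 6*k"
  by (simp add: bsl_def sum_list_replicate)

lemma wsum_bsl: "l \<le> 5 \<Longrightarrow> sum_list (map wt (bsl l k)) = 10"
  by (simp add: bsl_def sum_list_replicate wt_def)

lemma dsum_bsl: "l \<le> 5 \<Longrightarrow> sum_list (map dt (bsl l k)) = 5 - l + 2*k"
  by (simp add: bsl_def sum_list_replicate dt_def)

lemma ones_bsl: "length (filter (\<lambda>r. r = 1) (bsl l k)) = l"
  by (simp add: bsl_def)

lemma bsl_cons: "\<exists>r1 r2 rest. bsl l k = r1 # r2 # rest"
proof -
  have "length (bsl l k) \<ge> 2" by (simp add: bsl_def)
  then show ?thesis by (auto simp: Suc_le_length_iff numeral_2_eq_2)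
qed

lemma card_VV: "card (VV 0 bs) = Suc (sum_list bs)"
proof -
  have "VV 0 bs = {0..sum_list bs}" unfolding VV_def by auto
  then show ?thesis by simp
qed

lemma no_equitable:
  assumes ok: "okl bs" and cV: "card (VV 0 bs) = 3 * t" and small: "1 + sum_list (map dt bs) < t"
  shows "\<not> (\<exists>f. equitable_3_coloring (VV 0 bs) (EE 0 bs) f)"
proof
  assume "\<exists>f. equitable_3_coloring (VV 0 bs) (EE 0 bs) f"
  then obtain f where f: "equitable_3_coloring (VV 0 bs) (EE 0 bs) f" by blast
  let ?V = "VV 0 bs"
  let ?K = "\<lambda>i. {v\<in>?V. f v = i}"
  have lt: "\<forall>v\<in>?V. f v < 3" and prp: "\<forall>e\<in>EE 0 bs. \<forall>u\<in>e. \<forall>v\<in>e. u \<noteq> v \<longrightarrow> f u \<noteq> f v"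
    and bal: "\<forall>i<3. \<forall>j<3. card (?K i) \<le> card (?K j) + 1"
    using f unfolding equitable_3_coloring_def by auto
  have finV: "finite ?V" by (simp add: VV_def)
  have split: "?V = ?K 0 \<union> ?K 1 \<union> ?K 2"
  proof
    show "?V \<subseteq> ?K 0 \<union> ?K 1 \<union> ?K 2"
    proof
      fix v assume "v \<in> ?V"
      then have "f v < 3" using lt by blast
      then have "f v = 0 \<or> f v = 1 \<or> f v = 2" by auto
      then show "v \<in> ?K 0 \<union> ?K 1 \<union> ?K 2" using \<open>v \<in> ?V\<close> by auto
    qed
  qed auto
  have csum: "card ?V = card (?K 0) + card (?K 1) + card (?K 2)"
  proof -
    have "card (?K 0 \<union> ?K 1 \<union> ?K 2) = card (?K 0 \<union> ?K 1) + card (?K 2)"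
      by (rule card_Un_disjoint) (use finV in auto)
    also have "card (?K 0 \<union> ?K 1) = card (?K 0) + card (?K 1)"
      by (rule card_Un_disjoint) (use finV in auto)
    finally show ?thesis using split by simp
  qed
  have z: "0 \<in> ?V" by (simp add: VV_def)
  define a where "a = f 0"
  have a3: "a < 3" using lt z unfolding a_def by blast
  have big: "card (?K a) \<ge> t"
  proof (rule ccontr)
    assume "\<not> card (?K a) \<ge> t"
    then have "card (?K a) < t" by simp
    then have "\<forall>j<3. card (?K j) \<le> t" using bal a3 by fastforce
    then have le: "card (?K 0) \<le> t" "card (?K 1) \<le> t" "card (?K 2) \<le> t" by auto
    have "a = 0 \<or> a = 1 \<or> a = 2" using a3 by auto
    then have "card (?K 0) + card (?K 1) + card (?K 2) < 3 * t"
      using \<open>card (?K a) < t\<close> le by auto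
    then show False using csum cV by simp
  qed
  have indep: "\<forall>e\<in>EE 0 bs. \<not> e \<subseteq> ?K a"
  proof (intro ballI notI)
    fix e assume e: "e \<in> EE 0 bs" and sub: "e \<subseteq> ?K a"
    have "Min e < Max e" "e = {Min e, Max e}" using good_edge_MinMax EE_sub[OF ok e] by auto
    then have "Min e \<in> e" "Max e \<in> e" "Min e \<noteq> Max e" by (metis insertI1, metis insertI1 insert_commute, simp)
    then have "f (Min e) \<noteq> f (Max e)" using prp e by blast
    moreover have "f (Min e) = a" "f (Max e) = a" using sub \<open>Min e \<in> e\<close> \<open>Max e \<in> e\<close> by auto
    ultimately show False by simp
  qed
  have "card (?K a) \<le> 1 + sum_list (map dt bs)"
    by (rule indep_ind[OF ok, of "?K a" 0]) (use z indep in \<open>auto simp: a_def\<close>)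
  then show False using big small by simp
qed


theorem mainTheorem3:
  fixes n l :: nat
  assumes "l \<le> 5"
  shows "\<exists>(V :: nat set) (E :: nat set set).
           simple_graph V E \<and> triangle_free E \<and> outerplanar V E \<and>
           card V > n \<and> card (V1 V E) = l \<and> rho3 V E = 3 \<and>
           \<not> (\<exists>f. equitable_3_coloring V E f)"
proof -
  define bs where "bs = bsl l n"
  have ok: "okl bs" unfolding bs_def by (rule okl_bsl)
  obtain r1 r2 rest where len: "bs = r1 # r2 # rest" using bsl_cons unfolding bs_def by blast
  have V1e: "V1 (VV 0 bs) (EE 0 bs) = WW 0 bs" by (rule V1_eq[OF ok len])
  have sg: "simple_graph (VV 0 bs) (EE 0 bs)" by (rule simple_EE[OF ok])
  have tf: "triangle_free (EE 0 bs)" by (rule tri_free[OF ok])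
  have op: "outerplanar (VV 0 bs) (EE 0 bs)"
    by (rule outerplanar_good) (use EE_sub[OF ok] in blast)
  have sb: "sum_list bs = 20 - 3*l + 6*n" unfolding bs_def using sum_bsl[OF assms] .
  have cV: "card (VV 0 bs) = Suc (20 - 3*l + 6*n)" using card_VV sb by simp
  have cgt: "card (VV 0 bs) > n" using cV by simp
  have c1: "card (V1 (VV 0 bs) (EE 0 bs)) = l"
  proof -
    have "card (V1 (VV 0 bs) (EE 0 bs)) = card (WW 0 bs)" using V1e by simp
    also have "\<dots> = length (filter (\<lambda>r. r = 1) bs)" using WW_card[OF ok] by blast
    also have "\<dots> = l" unfolding bs_def by (rule ones_bsl)
    finally show ?thesis .
  qed
  have rs: "rho3_set (VV 0 bs) (EE 0 bs) A = rw (EE 0 bs) (WW 0 bs) A" for A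
    unfolding rho3_set_def rw_def induced_edges_def V1e ..
  have ws: "sum_list (map wt bs) = 10" unfolding bs_def using wsum_bsl[OF assms] .
  have r3: "rho3 (VV 0 bs) (EE 0 bs) = 3"
    unfolding rho3_def
  proof (rule Max_eqI)
    show "finite (rho3_set (VV 0 bs) (EE 0 bs) ` Pow (VV 0 bs))" by (simp add: VV_def)
  next
    fix y assume "y \<in> rho3_set (VV 0 bs) (EE 0 bs) ` Pow (VV 0 bs)"
    then obtain A where A: "A \<subseteq> VV 0 bs" "y = rho3_set (VV 0 bs) (EE 0 bs) A" by auto
    have "rw (EE 0 bs) (WW 0 bs) A \<le> (if 0 \<in> A then -7 + sum_list (map wt bs) else 0)"
      using rho_ind[OF ok A(1)] by blast
    then show "y \<le> 3" using A(2) rs ws by (simp split: if_splits)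
  next
    have "rw (EE 0 bs) (WW 0 bs) (VV 0 bs) = -7 + sum_list (map wt bs)"
      using rho_ind[OF ok order_refl] by blast
    then have "rho3_set (VV 0 bs) (EE 0 bs) (VV 0 bs) = 3" using rs ws by simp
    then show "3 \<in> rho3_set (VV 0 bs) (EE 0 bs) ` Pow (VV 0 bs)" by (metis Pow_top imageI)
  qed
  have ne: "\<not> (\<exists>f. equitable_3_coloring (VV 0 bs) (EE 0 bs) f)"
  proof (rule no_equitable[OF ok, of "7 - l + 2*n"])
    show "card (VV 0 bs) = 3 * (7 - l + 2 * n)" using cV assms by simp
    show "1 + sum_list (map dt bs) < 7 - l + 2 * n" unfolding bs_def using dsum_bsl[OF assms] assms by simp
  qed
  show ?thesis using sg tf op cgt c1 r3 ne by blast
qed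


end
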